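(* Consider the system of ordinary differential equations for $(T,I,V,A)$: \[ \frac{dT}{dt}=\Lambda-\mu T-\beta_0 VT,\qquad \frac{dI}{dt}=\beta_0 VT-\delta I,\qquad \frac{dV}{dt}=\omega I-cV-bAV,\qquad \frac{dA}{dt}=aVA-\sigma A, \] where all parameters $\Lambda,\mu,\beta_0,\delta,\omega,c,b,a,\sigma$ are strictly positive. Let $R_0=\frac{\beta_0\omega\Lambda}{c\delta\mu}$, $V^{is}=(R_0-1)\frac{\mu}{\beta_0}$ and $V^t=\frac{\sigma}{a}$. Assume that $\delta>\mu$ and that $(R_0-1)\frac{\mu}{\beta_0}>\frac{\sigma}{a}$ (i.e. $V^{is}>V^t$). Then this system has exactly one stable equilibrium, namely \[ T=\frac{\Lambda}{\mu+\beta_0V^t},\quad I=\frac{\beta_0\Lambda V^t}{\delta(\mu+\beta_0V^t)},\quad V=V^t,\quad A=\frac{c\,\beta_0\,(V^{is}-V^t)}{b(\mu+\beta_0V^t)}. \]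
   Context: An equilibrium is a point where all four right-hand sides vanish. "Stable" means (linearly, locally asymptotically) stable: all eigenvalues of the Jacobian matrix of the vector field at the equilibrium have strictly negative real parts. The other equilibria of the system are the trivial equilibrium $T=\Lambda/\mu$, $I=V=A=0$ and the "immunosuppression" equilibrium with $A=0$; these are not stable under the stated assumptions. *)

theory Defs
  imports "HOL-Analysis.Analysis" "Jordan_Normal_Form.Char_Poly"
begin

definition rhs :: "real \<Rightarrow> real \<Rightarrow> real \<Rightarrow> real \<Rightarrow> real \<Rightarrow> real \<Rightarrow> real \<Rightarrow> real \<Rightarrow> real
   \<Rightarrow> real \<times> real \<times> real \<times> real \<Rightarrow> real \<times> real \<times> real \<times> real" where
  "rhs \<Lambda> \<mu> \<beta>0 \<delta> \<omega> c b a \<sigma> = (\<lambda>(T, I, V, A).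
     (\<Lambda> - \<mu> * T - \<beta>0 * V * T,
      \<beta>0 * V * T - \<delta> * I,
      \<omega> * I - c * V - b * A * V,
      a * V * A - \<sigma> * A))"

definition is_equilibrium where
  "is_equilibrium \<Lambda> \<mu> \<beta>0 \<delta> \<omega> c b a \<sigma> p \<longleftrightarrow> rhs \<Lambda> \<mu> \<beta>0 \<delta> \<omega> c b a \<sigma> p = (0, 0, 0, 0)"

definition jacobian :: "real \<Rightarrow> real \<Rightarrow> real \<Rightarrow> real \<Rightarrow> real \<Rightarrow> real \<Rightarrow> real \<Rightarrow> real \<Rightarrow> real
   \<Rightarrow> real \<times> real \<times> real \<times> real \<Rightarrow> complex mat" where
  "jacobian \<Lambda> \<mu> \<beta>0 \<delta> \<omega> c b a \<sigma> = (\<lambda>(T, I, V, A).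
     map_mat complex_of_real (mat_of_rows_list 4
      [[- \<mu> - \<beta>0 * V, 0, - \<beta>0 * T, 0],
       [\<beta>0 * V, - \<delta>, \<beta>0 * T, 0],
       [0, \<omega>, - c - b * A, - b * V],
       [0, 0, a * A, a * V - \<sigma>]]))"

definition is_stable where
  "is_stable \<Lambda> \<mu> \<beta>0 \<delta> \<omega> c b a \<sigma> p \<longleftrightarrow>
     (\<forall>z. eigenvalue (jacobian \<Lambda> \<mu> \<beta>0 \<delta> \<omega> c b a \<sigma> p) z \<longrightarrow> Re z < 0)"

end

theory Submission
  imports Defs
begin



lemma jac_dim: "jacobian L m b0 d w c b a s p \<in> carrier_mat 4 4"
  by (cases p) (auto simp: jacobian_def mat_of_rows_list_def)
lemma jac_entries:
  "jacobian L m b0 d w c b a s (T,I,V,A) $$ (0,0) = complex_of_real (- m - b0 * V)"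
  "jacobian L m b0 d w c b a s (T,I,V,A) $$ (0,1) = 0"
  "jacobian L m b0 d w c b a s (T,I,V,A) $$ (0,2) = complex_of_real (- b0 * T)"
  "jacobian L m b0 d w c b a s (T,I,V,A) $$ (0,3) = 0"
  "jacobian L m b0 d w c b a s (T,I,V,A) $$ (1,0) = complex_of_real (b0 * V)"
  "jacobian L m b0 d w c b a s (T,I,V,A) $$ (1,1) = complex_of_real (- d)"
  "jacobian L m b0 d w c b a s (T,I,V,A) $$ (1,2) = complex_of_real (b0 * T)"
  "jacobian L m b0 d w c b a s (T,I,V,A) $$ (1,3) = 0"
  "jacobian L m b0 d w c b a s (T,I,V,A) $$ (2,0) = 0"
  "jacobian L m b0 d w c b a s (T,I,V,A) $$ (2,1) = complex_of_real w"
  "jacobian L m b0 d w c b a s (T,I,V,A) $$ (2,2) = complex_of_real (- c - b * A)"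
  "jacobian L m b0 d w c b a s (T,I,V,A) $$ (2,3) = complex_of_real (- b * V)"
  "jacobian L m b0 d w c b a s (T,I,V,A) $$ (3,0) = 0"
  "jacobian L m b0 d w c b a s (T,I,V,A) $$ (3,1) = 0"
  "jacobian L m b0 d w c b a s (T,I,V,A) $$ (3,2) = complex_of_real (a * A)"
  "jacobian L m b0 d w c b a s (T,I,V,A) $$ (3,3) = complex_of_real (a * V - s)"
  by (simp_all add: jacobian_def mat_of_rows_list_def)
lemma sum4: "(\<Sum>j<(4::nat). f j) = f 0 + f 1 + f 2 + (f 3 :: complex)"
  by (simp add: eval_nat_numeral)
lemma mv: "v \<in> carrier_vec 4 \<Longrightarrow> i < 4 \<Longrightarrow>
  (jacobian L m b0 d w c b a s p *\<^sub>v v) $ i = (\<Sum>j<4. jacobian L m b0 d w c b a s p $$ (i,j) * v $ j)"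
  using jac_dim[of L m b0 d w c b a s p]
  by (auto simp: scalar_prod_def lessThan_atLeast0 row_def)
lemma jac_ev_iff:
  "eigenvalue (jacobian L m b0 d w c b a s (T,I,V,A)) z \<longleftrightarrow>
   (\<exists>x1 x2 x3 x4::complex. (x1,x2,x3,x4) \<noteq> (0,0,0,0) \<and>
     of_real (- m - b0 * V) * x1 - of_real (b0 * T) * x3 = z * x1 \<and>
     of_real (b0 * V) * x1 - of_real d * x2 + of_real (b0 * T) * x3 = z * x2 \<and>
     of_real w * x2 - of_real (c + b * A) * x3 - of_real (b * V) * x4 = z * x3 \<and>
     of_real (a * A) * x3 + of_real (a * V - s) * x4 = z * x4)"
  (is "?l \<longleftrightarrow> ?r")
proof
  let ?J = "jacobian L m b0 d w c b a s (T,I,V,A)"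
  have dr: "dim_row ?J = 4" using jac_dim by blast
  assume ?l
  then obtain v where v: "v \<in> carrier_vec 4" "v \<noteq> 0\<^sub>v 4" "?J *\<^sub>v v = z \<cdot>\<^sub>v v"
    unfolding eigenvalue_def eigenvector_def dr by blast
  have e: "\<And>i. i < 4 \<Longrightarrow> (?J *\<^sub>v v) $ i = z * v $ i"
    using v(1,3) by (metis index_smult_vec(1) carrier_vecD)
  have nz: "(v$0,v$1,v$2,v$3) \<noteq> (0,0,0,0)"
  proof
    assume h: "(v$0,v$1,v$2,v$3) = (0,0,0,0)"
    have "v = 0\<^sub>v 4" 
    proof (rule eq_vecI)
      fix i assume "i < dim_vec (0\<^sub>v 4 :: complex vec)"
      then have "i = 0 \<or> i = 1 \<or> i = 2 \<or> i = 3" by auto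
      then show "v $ i = 0\<^sub>v 4 $ i" using h \<open>i < _\<close> by auto
    qed (use v(1) in auto)
    with v(2) show False by simp
  qed
  have q: "(\<Sum>j<4. ?J $$ (i,j) * v $ j) = z * v $ i" if "i < 4" for i
    using e[OF that] mv[OF v(1) that] by simp
  show ?r
    apply (rule exI[of _ "v$0"], rule exI[of _ "v$1"], rule exI[of _ "v$2"], rule exI[of _ "v$3"])
    using nz q[of 0] q[of 1] q[of 2] q[of 3] unfolding sum4 jac_entries
    by (simp add: algebra_simps)
next
  let ?J = "jacobian L m b0 d w c b a s (T,I,V,A)"
  have dr: "dim_row ?J = 4" using jac_dim by blast
  assume ?r
  then obtain x1 x2 x3 x4 where x: "(x1,x2,x3,x4) \<noteq> (0,0,0,0)" 
     "of_real (- m - b0 * V) * x1 - of_real (b0 * T) * x3 = z * x1"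
     "of_real (b0 * V) * x1 - of_real d * x2 + of_real (b0 * T) * x3 = z * x2"
     "of_real w * x2 - of_real (c + b * A) * x3 - of_real (b * V) * x4 = z * x3"
     "of_real (a * A) * x3 + of_real (a * V - s) * x4 = z * x4" by blast
  define v where "v = vec 4 (\<lambda>i. [x1,x2,x3,x4] ! i)"
  have vc: "v \<in> carrier_vec 4" by (simp add: v_def)
  have vi: "v$0 = x1" "v$1 = x2" "v$2 = x3" "v$3 = x4" by (simp_all add: v_def numeral_eq_Suc)
  show ?l
    unfolding eigenvalue_def eigenvector_def dr
  proof (intro exI conjI)
    show "v \<in> carrier_vec 4" by (rule vc)
    show "v \<noteq> 0\<^sub>v 4"
    proof
      assume "v = 0\<^sub>v 4"
      then have "v$0 = 0" "v$1 = 0" "v$2 = 0" "v$3=0" by auto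
      with x(1) show False unfolding vi by simp
    qed
    show "?J *\<^sub>v v = z \<cdot>\<^sub>v v"
    proof (rule eq_vecI)
      fix i assume "i < dim_vec (z \<cdot>\<^sub>v v)"
      then have i4: "i < 4" using vc by auto
      have r0: "(\<Sum>j<4. ?J $$ (0,j) * v $ j) = z * v $ 0"
        unfolding sum4 jac_entries vi using x(2) by (simp add: algebra_simps)
      have r1: "(\<Sum>j<4. ?J $$ (1,j) * v $ j) = z * v $ 1"
        unfolding sum4 jac_entries vi using x(3) by (simp add: algebra_simps)
      have r2: "(\<Sum>j<4. ?J $$ (2,j) * v $ j) = z * v $ 2"
        unfolding sum4 jac_entries vi using x(4) by (simp add: algebra_simps)
      have r3: "(\<Sum>j<4. ?J $$ (3,j) * v $ j) = z * v $ 3"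
        unfolding sum4 jac_entries vi using x(5) by (simp add: algebra_simps)
      have "i = 0 \<or> i = 1 \<or> i = 2 \<or> i = 3" using i4 by auto
      then show "(?J *\<^sub>v v) $ i = (z \<cdot>\<^sub>v v) $ i"
        unfolding mv[OF vc i4] using r0 r1 r2 r3 vc i4 by auto
    qed (use vc dr in auto)
  qed
qed




lemma cmod_shift_less:
  fixes z :: complex assumes "Re z \<ge> 0" "0 \<le> u" "u < v"
  shows "cmod (z + of_real u) < cmod (z + of_real v)"
proof -
  have "(Re z + u)^2 < (Re z + v)^2" using assms by (intro power_strict_mono) auto
  then have "(Re z + u)^2 + (Im z)^2 < (Re z + v)^2 + (Im z)^2" by simp
  then show ?thesis unfolding cmod_def by (simp add: real_sqrt_less_iff)
qed

lemma cmod_shift_ge: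
  fixes z :: complex assumes "Re z \<ge> 0" "0 \<le> u"
  shows "u \<le> cmod (z + of_real u)"
proof -
  have "u \<le> Re (z + of_real u)" using assms by simp
  also have "\<dots> \<le> cmod (z + of_real u)" by (rule complex_Re_le_cmod)
  finally show ?thesis .
qed

lemma eq_from: "(u::'a::comm_ring_1) = v \<Longrightarrow> p - q = e * (u - v) \<Longrightarrow> p = q"
  by simp

lemma stable_point:
  assumes pos: "m>0" "b0>0" "d>0" "c>0" "b>0" "a>0" "V>0" "A>0"
    and eq4: "a*V - s = 0" and eqr: "w*b0*T = d*(c+b*A)"
    and ev: "eigenvalue (jacobian L m b0 d w c b a s (T,I,V,A)) z"
  shows "Re z < 0"
proof (rule ccontr)
  assume "\<not> Re z < 0"
  then have rz: "Re z \<ge> 0" by simp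
  obtain x1 x2 x3 x4 :: complex where x: "(x1,x2,x3,x4) \<noteq> (0,0,0,0)" 
     "of_real (- m - b0 * V) * x1 - of_real (b0 * T) * x3 = z * x1"
     "of_real (b0 * V) * x1 - of_real d * x2 + of_real (b0 * T) * x3 = z * x2"
     "of_real w * x2 - of_real (c + b * A) * x3 - of_real (b * V) * x4 = z * x3"
     "of_real (a * A) * x3 + of_real (a * V - s) * x4 = z * x4"
    using ev unfolding jac_ev_iff by blast
  define P where "P = m + b0 * V"
  define r where "r = c + b * A"
  define k where "k = a * b * A * V"
  have Ppos: "P > m" using pos by (simp add: P_def)
  have rpos: "r > 0" using pos unfolding r_def by (simp add: add_pos_pos)
  have kpos: "k > 0" using pos by (simp add: k_def)
  have zP: "z + of_real P \<noteq> 0"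
  proof
    assume "z + of_real P = 0"
    then have "Re (z + of_real P) = 0" by simp
    with rz Ppos pos show False by simp
  qed
  have zd: "z + of_real d \<noteq> 0"
  proof
    assume "z + of_real d = 0"
    then have "Re (z + of_real d) = 0" by simp
    with rz pos show False by simp
  qed
  have h1: "x1 * (z + of_real P) = - of_real (b0 * T) * x3"
    by (rule eq_from[OF x(2), where e = "-1"]) (simp add: P_def algebra_simps)
  have h2: "x2 * (z + of_real d) = of_real (b0 * V) * x1 + of_real (b0 * T) * x3"
    by (rule eq_from[OF x(3), where e = "-1"]) (simp add: algebra_simps)
  have h3: "of_real w * x2 = (z + of_real r) * x3 + of_real (b * V) * x4"
    by (rule eq_from[OF x(4), where e = "1"]) (simp add: r_def algebra_simps)
  have h4: "z * x4 = of_real (a * A) * x3"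
    using x(5) eq4 by simp
  have x3: "x3 \<noteq> 0"
  proof
    assume x30: "x3 = 0"
    then have "x1 = 0" using h1 zP by simp
    moreover have "x2 = 0" using h2 zd x30 \<open>x1 = 0\<close> by simp
    moreover have "x4 = 0" using h3 x30 \<open>x2 = 0\<close> pos by simp
    ultimately show False using x(1) x30 by simp
  qed
  have z0: "z \<noteq> 0"
  proof
    assume "z = 0"
    then have "of_real (a * A) * x3 = 0" using h4 by simp
    with x3 pos show False by simp
  qed
  have g1: "(z + of_real P) * (z + of_real d) * x2 = of_real (b0*T) * (z + of_real m) * x3"
  proof -
    have "(z + of_real P) * (z + of_real d) * x2 = (z + of_real P) * (of_real (b0 * V) * x1 + of_real (b0 * T) * x3)"
      by (rule eq_from[OF h2, where e = "z + of_real P"]) (simp add: algebra_simps)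
    also have "\<dots> = of_real (b0 * V) * (x1 * (z + of_real P)) + (z + of_real P) * of_real (b0 * T) * x3"
      by (simp add: algebra_simps)
    also have "\<dots> = of_real (b0*T) * (z + of_real m) * x3"
      unfolding h1 by (simp add: P_def algebra_simps)
    finally show ?thesis .
  qed
  have g2: "of_real w * z * ((z + of_real P) * (z + of_real d) * x2)
      = (z + of_real P) * (z + of_real d) * (z * (z + of_real r) * x3 + of_real (b * V) * (z * x4))"
    by (rule eq_from[OF h3, where e = "z * (z + of_real P) * (z + of_real d)"]) (simp add: algebra_simps)
  have g3: "(of_real (w * b0 * T) * z * (z + of_real m)) * x3
      = ((z + of_real P) * (z + of_real d) * (z * (z + of_real r) + of_real k)) * x3"
    by (rule eq_from[OF g2[unfolded g1 h4], where e = 1]) (simp add: k_def algebra_simps)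
  have g3': "of_real (w * b0 * T) * z * (z + of_real m)
      = (z + of_real P) * (z + of_real d) * (z * (z + of_real r) + of_real k)"
    using g3 x3 by (simp only: mult_cancel_right) simp
  have zz: "z * (z + of_real r) + of_real k = z * (z + of_real r + of_real k / z)"
    using z0 by (simp add: field_simps)
  have g4: "of_real (d * r) * z * (z + of_real m)
      = (z + of_real P) * (z + of_real d) * (z * (z + of_real r + of_real k / z))"
  proof -
    have e: "of_real (w*b0*T) = (of_real (d*r) :: complex)" using eqr by (simp add: r_def)
    show ?thesis using g3' unfolding zz[symmetric] e .
  qed
  have "cmod (of_real (d * r) * z * (z + of_real m)) = d * r * cmod z * cmod (z + of_real m)"
    using pos rpos by (simp add: norm_mult)
  also have "\<dots> < r * cmod z * (cmod (z + of_real P) * cmod (z + of_real d))"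
  proof -
    have "cmod (z + of_real m) < cmod (z + of_real P)" using cmod_shift_less[OF rz, of m P] pos Ppos by simp
    moreover have "d \<le> cmod (z + of_real d)" using cmod_shift_ge[OF rz, of d] pos by simp
    ultimately have "d * cmod (z + of_real m) < cmod (z + of_real P) * cmod (z + of_real d)"
    proof -
      assume a1: "cmod (z + of_real m) < cmod (z + of_real P)" and a2: "d \<le> cmod (z + of_real d)"
      have "d * cmod (z + of_real m) < d * cmod (z + of_real P)" using a1 pos(3) by simp
      also have "\<dots> \<le> cmod (z + of_real d) * cmod (z + of_real P)"
        using a2 by (intro mult_right_mono) auto
      finally show ?thesis by (simp add: mult.commute)
    qed
    moreover have "r * cmod z > 0" using rpos z0 by simp
    ultimately have "(r * cmod z) * (d * cmod (z + of_real m)) < (r * cmod z) * (cmod (z + of_real P) * cmod (z + of_real d))"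
      by (intro mult_strict_left_mono)
    then show ?thesis by (simp add: ac_simps)
  qed
  also have "\<dots> \<le> cmod (z + of_real r + of_real k / z) * cmod z * (cmod (z + of_real P) * cmod (z + of_real d))"
  proof -
    have "Re (of_real k / z) \<ge> 0" using kpos rz by (simp add: Re_divide)
    then have "r \<le> Re (z + of_real r + of_real k / z)" using rz by simp
    also have "\<dots> \<le> cmod (z + of_real r + of_real k / z)" by (rule complex_Re_le_cmod)
    finally show ?thesis by (intro mult_right_mono) auto
  qed
  also have "\<dots> = cmod ((z + of_real P) * (z + of_real d) * (z * (z + of_real r + of_real k / z)))"
    by (simp add: norm_mult)
  finally show False unfolding g4 by simp
qed



lemma last_row_eigen:
  fixes J :: "complex mat"
  assumes J: "J \<in> carrier_mat 4 4" and z: "J $$ (3,0) = 0" "J $$ (3,1) = 0" "J $$ (3,2) = 0"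
  shows "eigenvalue J (J $$ (3,3))"
proof -
  have Jt: "transpose_mat J \<in> carrier_mat 4 4" using J by simp
  let ?e = "unit_vec 4 3 :: complex vec"
  have "eigenvector (transpose_mat J) ?e (J $$ (3,3))"
    unfolding eigenvector_def
  proof (intro conjI)
    show "?e \<in> carrier_vec (dim_row (transpose_mat J))" using J by simp
    show "?e \<noteq> 0\<^sub>v (dim_row (transpose_mat J))"
    proof
      assume "?e = 0\<^sub>v (dim_row (transpose_mat J))"
      then have "?e $ 3 = 0\<^sub>v (dim_row (transpose_mat J)) $ 3" by simp
      then show False using J by simp
    qed
    show "transpose_mat J *\<^sub>v ?e = J $$ (3,3) \<cdot>\<^sub>v ?e"
    proof (rule eq_vecI)
      fix i assume "i < dim_vec (J $$ (3,3) \<cdot>\<^sub>v ?e)"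
      then have i: "i < 4" by simp
      have "(transpose_mat J *\<^sub>v ?e) $ i = row (transpose_mat J) i \<bullet> ?e" using i J by simp
      also have "\<dots> = row (transpose_mat J) i $ 3" using i J by (simp add: scalar_prod_right_unit)
      also have "\<dots> = J $$ (3, i)" using i J by simp
      also have "\<dots> = (J $$ (3,3) \<cdot>\<^sub>v ?e) $ i"
        using i z by (cases "i = 3") (auto simp: less_Suc_eq numeral_eq_Suc)
      finally show "(transpose_mat J *\<^sub>v ?e) $ i = (J $$ (3,3) \<cdot>\<^sub>v ?e) $ i" .
    qed (use J in simp)
  qed
  then have "eigenvalue (transpose_mat J) (J $$ (3,3))" unfolding eigenvalue_def by blast
  then show ?thesis
    unfolding eigenvalue_root_char_poly[OF J] eigenvalue_root_char_poly[OF Jt] char_poly_transpose_mat[OF J] .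
qed




lemma trivial_unstable:
  assumes pos: "m>0" "d>0" "c>0" "w>0" and K: "b0*w*T > d*c"
  shows "\<exists>z. eigenvalue (jacobian L m b0 d w c b a s (T,I,0,0)) z \<and> Re z > 0"
proof -
  define D where "D = (d+c)^2 - 4*(d*c - b0*w*T)"
  define l where "l = (-(d+c) + sqrt D)/2"
  have Dpos: "D > (d+c)^2" using K by (simp add: D_def)
  have D0: "D \<ge> 0" using Dpos by (smt (verit) zero_le_power2)
  have sD: "sqrt D ^ 2 = D" using D0 by simp
  have "sqrt ((d+c)^2) < sqrt D" using Dpos by (simp only: real_sqrt_less_iff)
  then have "d + c < sqrt D" using pos by simp
  then have lpos: "l > 0" by (simp add: l_def)
  have lq: "(l + d) * (l + c) = b0 * w * T"
  proof -
    have "(l + d) * (l + c) = (sqrt D ^ 2 - (d+c)^2)/4 + d*c"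
      by (simp add: l_def power2_eq_square field_simps)
    also have "\<dots> = b0*w*T" unfolding sD by (simp add: D_def field_simps)
    finally show ?thesis .
  qed
  define x1 where "x1 = - b0 * T / (l + m)"
  define x2 where "x2 = (l + c) / w"
  have e1: "(- m - b0 * 0) * x1 - b0 * T * 1 = l * x1"
    using lpos pos by (simp add: x1_def field_simps)
  have e2: "b0 * 0 * x1 - d * x2 + b0 * T * 1 = l * x2"
  proof -
    have "b0 * T = (l + d) * x2" using lq pos by (simp add: x2_def field_simps)
    then show ?thesis by (simp add: algebra_simps)
  qed
  have e3: "w * x2 - (c + b * 0) * 1 - b * 0 * 0 = l * 1"
    using pos by (simp add: x2_def field_simps)
  have "eigenvalue (jacobian L m b0 d w c b a s (T,I,0,0)) (of_real l)"
    unfolding jac_ev_iff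
    apply (rule exI[of _ "of_real x1"], rule exI[of _ "of_real x2"], rule exI[of _ 1], rule exI[of _ 0])
    using arg_cong[OF e1, of complex_of_real] arg_cong[OF e2, of complex_of_real] arg_cong[OF e3, of complex_of_real]
    by simp
  then show ?thesis using lpos by auto
qed




lemma cancel_helper: "(d::real) \<noteq> 0 \<Longrightarrow> d * (x / (d * m)) = x / m"
  by (cases "m = 0") (simp_all add: field_simps)

theorem proposition1:
  fixes \<Lambda> \<mu> \<beta>0 \<delta> \<omega> c b a \<sigma> :: real
  assumes pos: "\<Lambda> > 0" "\<mu> > 0" "\<beta>0 > 0" "\<delta> > 0" "\<omega> > 0" "c > 0" "b > 0" "a > 0" "\<sigma> > 0"
    and "\<delta> > \<mu>"
    and "(\<beta>0 * \<omega> * \<Lambda> / (c * \<delta> * \<mu>) - 1) * \<mu> / \<beta>0 > \<sigma> / a"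
  shows "{p. is_equilibrium \<Lambda> \<mu> \<beta>0 \<delta> \<omega> c b a \<sigma> p \<and> is_stable \<Lambda> \<mu> \<beta>0 \<delta> \<omega> c b a \<sigma> p}
    = (let R0 = \<beta>0 * \<omega> * \<Lambda> / (c * \<delta> * \<mu>);
           Vis = (R0 - 1) * \<mu> / \<beta>0;
           Vt = \<sigma> / a
       in {(\<Lambda> / (\<mu> + \<beta>0 * Vt),
            \<beta>0 * \<Lambda> * Vt / (\<delta> * (\<mu> + \<beta>0 * Vt)),
            Vt,
            c * \<beta>0 * (Vis - Vt) / (b * (\<mu> + \<beta>0 * Vt)))})"
proof -
  define R0 where "R0 = \<beta>0 * \<omega> * \<Lambda> / (c * \<delta> * \<mu>)"
  define Vis where "Vis = (R0 - 1) * \<mu> / \<beta>0"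
  define Vt where "Vt = \<sigma> / a"
  have Vt: "Vt > 0" using pos by (simp add: Vt_def)
  have aVt: "a * Vt = \<sigma>" using pos by (simp add: Vt_def)
  have VisVt: "Vis > Vt" using assms(11) by (simp add: Vis_def Vt_def R0_def)
  have "(R0 - 1) * \<mu> / \<beta>0 > 0" using VisVt Vt by (simp add: Vis_def)
  then have R0: "R0 > 1" using pos by (simp add: zero_less_divide_iff zero_less_mult_iff)
  have hR: "R0 * (c * \<delta> * \<mu>) = \<beta>0 * \<omega> * \<Lambda>" using pos by (simp add: R0_def)
  have hVis: "\<mu> + \<beta>0 * Vis = R0 * \<mu>" using pos by (simp add: Vis_def field_simps)
  define Pt where "Pt = (\<Lambda> / (\<mu> + \<beta>0 * Vt),
            \<beta>0 * \<Lambda> * Vt / (\<delta> * (\<mu> + \<beta>0 * Vt)),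
            Vt,
            c * \<beta>0 * (Vis - Vt) / (b * (\<mu> + \<beta>0 * Vt)))"
  have rhs_eq: "(let R0 = \<beta>0 * \<omega> * \<Lambda> / (c * \<delta> * \<mu>);
           Vis = (R0 - 1) * \<mu> / \<beta>0;
           Vt = \<sigma> / a
       in {(\<Lambda> / (\<mu> + \<beta>0 * Vt),
            \<beta>0 * \<Lambda> * Vt / (\<delta> * (\<mu> + \<beta>0 * Vt)),
            Vt,
            c * \<beta>0 * (Vis - Vt) / (b * (\<mu> + \<beta>0 * Vt)))}) = {Pt}"
    unfolding Let_def Pt_def R0_def Vis_def Vt_def ..
  have mVt: "\<mu> + \<beta>0 * Vt > 0" using pos Vt by (simp add: add_pos_pos)
  show ?thesis unfolding rhs_eq
  proof (intro equalityI subsetI)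
    fix p assume "p \<in> {p. is_equilibrium \<Lambda> \<mu> \<beta>0 \<delta> \<omega> c b a \<sigma> p \<and> is_stable \<Lambda> \<mu> \<beta>0 \<delta> \<omega> c b a \<sigma> p}"
    then have eqp: "is_equilibrium \<Lambda> \<mu> \<beta>0 \<delta> \<omega> c b a \<sigma> p" and stp: "is_stable \<Lambda> \<mu> \<beta>0 \<delta> \<omega> c b a \<sigma> p" by auto
    obtain T I V A where p: "p = (T,I,V,A)" by (cases p) auto
    have E1: "\<Lambda> - \<mu> * T - \<beta>0 * V * T = 0" and E2: "\<beta>0 * V * T - \<delta> * I = 0"
      and E3: "\<omega> * I - c * V - b * A * V = 0" and E4: "a * V * A - \<sigma> * A = 0"
      using eqp unfolding p is_equilibrium_def rhs_def by auto
    have st: "\<And>z. eigenvalue (jacobian \<Lambda> \<mu> \<beta>0 \<delta> \<omega> c b a \<sigma> (T,I,V,A)) z \<Longrightarrow> Re z < 0"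
      using stp unfolding p is_stable_def by auto
    have "A * (a * V - \<sigma>) = 0" using E4 by (simp add: algebra_simps)
    then have "A = 0 \<or> V = Vt" using pos by (auto simp: Vt_def field_simps)
    then show "p \<in> {Pt}"
    proof
      assume A0: "A = 0"
      show ?thesis
      proof (cases "V = 0")
        case True
        have gtR: "\<beta>0 * \<omega> * \<Lambda> > c * \<delta> * \<mu>"
        proof -
          have cp: "c * \<delta> * \<mu> > 0" using pos by simp
          have "1 * (c * \<delta> * \<mu>) < R0 * (c * \<delta> * \<mu>)" using R0 cp by (rule mult_strict_right_mono)
          then show ?thesis using hR by simp
        qed
        have T: "T = \<Lambda> / \<mu>" using E1 True pos by (simp add: field_simps)
        have "\<delta> * c * \<mu> < \<beta>0 * \<omega> * \<Lambda>" using gtR by (simp add: ac_simps)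
        then have "\<delta> * c < \<beta>0 * \<omega> * \<Lambda> / \<mu>" using pos(2) by (simp add: pos_less_divide_eq)
        then have "\<beta>0 * \<omega> * T > \<delta> * c" unfolding T by simp
        then obtain z where "eigenvalue (jacobian \<Lambda> \<mu> \<beta>0 \<delta> \<omega> c b a \<sigma> (T,I,0,0)) z" "Re z > 0"
          using trivial_unstable[of \<mu> \<delta> c \<omega> \<beta>0 T] pos by blast
        with st[of z] True A0 show ?thesis by simp
      next
        case False
        have i1: "\<beta>0 * V * T = \<delta> * I" using E2 by simp
        have i2: "\<omega> * I = c * V" using E3 A0 by simp
        have "\<omega> * \<beta>0 * V * T = \<omega> * (\<beta>0 * V * T)" by (simp add: ac_simps)
        also have "\<dots> = \<delta> * (\<omega> * I)" unfolding i1 by (simp add: ac_simps)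
        also have "\<dots> = \<delta> * c * V" unfolding i2 by (simp add: ac_simps)
        finally have "\<omega> * \<beta>0 * V * T = \<delta> * c * V" .
        then have T: "T = c * \<delta> / (\<beta>0 * \<omega>)" using False pos by (simp add: field_simps)
        have Tpos: "T > 0" unfolding T using pos by simp
        have V1: "V = (\<Lambda> - \<mu> * T) / (\<beta>0 * T)" using E1 Tpos pos by (simp add: field_simps)
        have V2: "V = (\<beta>0 * \<omega> * \<Lambda> - c * \<delta> * \<mu>) / (c * \<delta> * \<beta>0)"
          unfolding V1 T using pos by (simp add: field_simps)
        have V3: "Vis = (\<beta>0 * \<omega> * \<Lambda> - c * \<delta> * \<mu>) / (c * \<delta> * \<beta>0)"
          unfolding Vis_def R0_def using pos by (simp add: field_simps)
        have "V = Vis" using V2 V3 by simp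
        then have gt: "a * V - \<sigma> > 0" using VisVt pos by (simp add: Vt_def field_simps)
        let ?J = "jacobian \<Lambda> \<mu> \<beta>0 \<delta> \<omega> c b a \<sigma> (T,I,V,A)"
        have "eigenvalue ?J (?J $$ (3,3))"
          by (rule last_row_eigen[OF jac_dim]) (unfold jac_entries A0, simp_all)
        then have "Re (?J $$ (3,3)) < 0" by (rule st)
        with gt show ?thesis by (simp add: jac_entries)
      qed
    next
      assume V: "V = Vt"
      have T: "T = \<Lambda> / (\<mu> + \<beta>0 * Vt)" using E1 V mVt by (simp add: field_simps)
      have I1: "I = \<beta>0 * Vt * T / \<delta>" using E2 V pos by (simp add: field_simps)
      have I: "I = \<beta>0 * \<Lambda> * Vt / (\<delta> * (\<mu> + \<beta>0 * Vt))" unfolding I1 T using pos mVt by (simp add: field_simps)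
      have "b * A * Vt = \<omega> * I - c * Vt" using E3 V by simp
      then have "b * A = \<omega> * I / Vt - c" using Vt by (simp add: field_simps)
      then have "A = (\<omega> * I / Vt - c) / b" using pos by (simp add: field_simps)
      also have "\<dots> = c * \<beta>0 * (Vis - Vt) / (b * (\<mu> + \<beta>0 * Vt))"
      proof -
        have hb: "\<beta>0 * Vis = R0 * \<mu> - \<mu>" using hVis by linarith
        have nz: "Vt \<noteq> 0" "\<delta> \<noteq> 0" "\<mu> + \<beta>0 * Vt \<noteq> 0" "b \<noteq> 0" using Vt pos mVt by auto
        have s1: "\<omega> * I / Vt = (\<beta>0 * \<omega> * \<Lambda>) / (\<delta> * (\<mu> + \<beta>0 * Vt))"
          unfolding I using nz(1) by (simp add: divide_simps ac_simps)
        also have "\<dots> = R0 * c * \<mu> / (\<mu> + \<beta>0 * Vt)" unfolding hR[symmetric] using nz by (simp add: divide_simps ac_simps)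
        finally have s2: "\<omega> * I / Vt - c = (c * (\<beta>0 * Vis) - c * \<beta>0 * Vt) / (\<mu> + \<beta>0 * Vt)"
          unfolding hb using nz by (simp add: field_simps)
        show ?thesis unfolding s2 using nz by (simp add: field_simps)
      qed
      finally show ?thesis unfolding p Pt_def using T I V by simp
    qed
  next
    fix p assume "p \<in> {Pt}"
    then have p: "p = Pt" by simp
    define T where "T = \<Lambda> / (\<mu> + \<beta>0 * Vt)"
    define I where "I = \<beta>0 * \<Lambda> * Vt / (\<delta> * (\<mu> + \<beta>0 * Vt))"
    define A where "A = c * \<beta>0 * (Vis - Vt) / (b * (\<mu> + \<beta>0 * Vt))"
    have Pt': "Pt = (T, I, Vt, A)" unfolding Pt_def T_def I_def A_def ..
    have Apos: "A > 0" using VisVt pos mVt by (simp add: A_def)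
    have cbA: "\<delta> * (c + b * A) = \<omega> * \<beta>0 * T"
    proof -
      have "c + b * A = c * (\<mu> + \<beta>0 * Vis) / (\<mu> + \<beta>0 * Vt)" proof -
        have m0: "\<mu> + \<beta>0 * Vt \<noteq> 0" "b \<noteq> 0" using mVt pos by auto
        have "b * A = c * \<beta>0 * (Vis - Vt) / (\<mu> + \<beta>0 * Vt)" unfolding A_def using m0 by simp
        then have "c + b * A = (c * (\<mu> + \<beta>0 * Vt) + c * \<beta>0 * (Vis - Vt)) / (\<mu> + \<beta>0 * Vt)"
          using m0 by (simp add: add_divide_distrib)
        also have "c * (\<mu> + \<beta>0 * Vt) + c * \<beta>0 * (Vis - Vt) = c * (\<mu> + \<beta>0 * Vis)" by (simp add: algebra_simps)
        finally show ?thesis .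
      qed
      also have "\<dots> = c * R0 * \<mu> / (\<mu> + \<beta>0 * Vt)" unfolding hVis by simp
      finally show ?thesis using hR pos unfolding T_def by (simp add: field_simps)
    qed
    have eq: "is_equilibrium \<Lambda> \<mu> \<beta>0 \<delta> \<omega> c b a \<sigma> p"
    proof -
      have 1: "\<Lambda> - \<mu> * T - \<beta>0 * Vt * T = 0" using mVt by (simp add: T_def field_simps)
      have dI: "\<delta> * I = \<beta>0 * Vt * T"
      proof -
        have "\<delta> * I = \<beta>0 * \<Lambda> * Vt / (\<mu> + \<beta>0 * Vt)" unfolding I_def using pos(4) by (intro cancel_helper) simp
        then show ?thesis unfolding T_def by (simp add: ac_simps)
      qed
      have 2: "\<beta>0 * Vt * T - \<delta> * I = 0" using dI by simp
      have 3: "\<omega> * I - c * Vt - b * A * Vt = 0"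
      proof -
        have "\<delta> * (\<omega> * I) = \<omega> * (\<delta> * I)" by (simp add: ac_simps)
        also have "\<dots> = (\<omega> * \<beta>0 * T) * Vt" unfolding dI by (simp add: ac_simps)
        also have "\<dots> = \<delta> * ((c + b * A) * Vt)" unfolding cbA[symmetric] by (simp add: ac_simps)
        finally have "\<omega> * I = (c + b * A) * Vt" using pos(4) by simp
        then show ?thesis by (simp add: algebra_simps)
      qed
      have 4: "a * Vt * A - \<sigma> * A = 0" using aVt by simp
      show ?thesis unfolding p Pt' is_equilibrium_def rhs_def using 1 2 3 4 by simp
    qed
    have "is_stable \<Lambda> \<mu> \<beta>0 \<delta> \<omega> c b a \<sigma> p"
      unfolding is_stable_def p Pt'
    proof (intro allI impI)
      fix z assume evz: "eigenvalue (jacobian \<Lambda> \<mu> \<beta>0 \<delta> \<omega> c b a \<sigma> (T, I, Vt, A)) z"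
      have e4: "a * Vt - \<sigma> = 0" using aVt by simp
      have er: "\<omega> * \<beta>0 * T = \<delta> * (c + b * A)" using cbA by simp
      show "Re z < 0" by (rule stable_point[OF pos(2,3,4,6,7,8) Vt Apos e4 er evz])
    qed
    with eq show "p \<in> {p. is_equilibrium \<Lambda> \<mu> \<beta>0 \<delta> \<omega> c b a \<sigma> p \<and> is_stable \<Lambda> \<mu> \<beta>0 \<delta> \<omega> c b a \<sigma> p}" by simp
  qed
qed


end
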